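(* Let $$A= \begin{pmatrix} 1& -2& 2\\ 2&-1& 2\\ 2&-2& 3 \end{pmatrix}.$$ For positive integers $m,n$ define the triple $F(m,n)=(x,y,z)$ by $$x = \frac{3-(-1)^m}{2}mn+m,\qquad y = \frac{x^2-m^2}{2m},\qquad z = \frac{x^2+m^2}{2m}.$$ Then for every positive integer $n$, $$A^{n-1}\begin{pmatrix}3\\4\\5\end{pmatrix} = F(1,n)^\top .$$
   Context: $A^0$ denotes the $3\times 3$ identity matrix; triples are regarded as row vectors and $\top$ denotes transpose. *)

theory Defs
  imports "HOL-Analysis.Analysis"
begin

primrec matpow :: "real^3^3 \<Rightarrow> nat \<Rightarrow> real^3^3" where
  "matpow A 0 = mat 1"
| "matpow A (Suc k) = A ** matpow A k"

definition A_mat :: "real^3^3" where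
  "A_mat = vector [vector [1, -2, 2], vector [2, -1, 2], vector [2, -2, 3]]"

definition F_x :: "nat \<Rightarrow> nat \<Rightarrow> real" where
  "F_x m n = (3 - (-1) ^ m) / 2 * real m * real n + real m"

definition F :: "nat \<Rightarrow> nat \<Rightarrow> real^3" where
  "F m n = (let x = F_x m n in
     vector [x, (x^2 - (real m)^2) / (2 * real m), (x^2 + (real m)^2) / (2 * real m)])"

end

theory Submission
  imports Defs
begin

definition G :: "nat \<Rightarrow> real^3" where
  "G k = vector [2 * real k + 3, 2 * (real k + 1)^2 + 2 * (real k + 1),
                 2 * (real k + 1)^2 + 2 * (real k + 1) + 1]"

lemma stepA: "A_mat *v G k = G (Suc k)"
  unfolding A_mat_def G_def
  by (simp add: vec_eq_iff forall_3 matrix_vector_mult_def sum_3 vector_3 algebra_simps power2_eq_square)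

lemma powG: "matpow A_mat k *v (vector [3, 4, 5] :: real^3) = G k"
proof (induction k)
  case 0
  show ?case by (simp add: G_def vec_eq_iff forall_3 vector_3)
next
  case (Suc k)
  have "matpow A_mat (Suc k) *v (vector [3, 4, 5] :: real^3)
        = A_mat *v (matpow A_mat k *v vector [3, 4, 5])"
    by (simp add: matrix_vector_mul_assoc)
  also have "\<dots> = G (Suc k)" using Suc stepA by simp
  finally show ?case .
qed

theorem mainTheorem1:
  fixes n :: nat
  assumes "n \<ge> 1"
  shows "matpow A_mat (n - 1) *v (vector [3, 4, 5] :: real^3) = F 1 n"
proof -
  obtain k where k: "n = Suc k" using assms by (cases n) auto
  have "F 1 n = G k"
    unfolding F_def F_x_def G_def k
    by (simp add: vec_eq_iff forall_3 vector_3 algebra_simps power2_eq_square)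
  then show ?thesis using powG[of k] k by simp
qed

end
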